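(* Let $F:P\to\mathbb R^{\mathbf C}$ be a nontrivial, $\mathbb R$-linear, neutral cardinal welfare function. Then $F$ satisfies the IIA criterion if and only if $|\lambda|=2$.
   Context: Fix an integer $n\ge 2$ and a set $\mathbf C$ of $n$ candidates. Fix a composition $\lambda=(\lambda_1,\dots,\lambda_m)$ of $n$ (positive integers with $\sum_i\lambda_i=n$), write $|\lambda|=m$ and $[m]=\{1,\dots,m\}$. A ballot is a function $b:\mathbf C\to[m]$ with $|b^{-1}(i)|=\lambda_i$ for every $i$; $\mathbf C_\lambda$ denotes the set of ballots. The profile space is $P=\mathbb R^{\mathbf C_\lambda}$ with basis $\{\delta_b\}$ (indicator functions) and inner product $\mathbf p\cdot\mathbf q=\sum_b\mathbf p(b)\mathbf q(b)$. For candidates $X,Y$: $\mathbf a_{X>Y}=\sum_{b:\,b(X)<b(Y)}\delta_b$. Two profiles are $X,Y$-equivalent, $\mathbf p\sim_{X,Y}\mathbf q$, if $(\mathbf p-\mathbf q)\cdot\mathbf a_{X>Y}=0$ and $(\mathbf p-\mathbf q)\cdot\mathbf a_{Y>X}=0$. A cardinal welfare function (CWF) is any map $F:P\to\mathbb R^{\mathbf C}$; it is trivial if for every $\mathbf p$ the function $F(\mathbf p):\mathbf C\to\mathbb R$ is constant. The symmetric group $S_{\mathbf C}$ acts on $\mathbf C_\lambda$ by $\sigma.b=b\circ\sigma^{-1}$, on $P$ by linearly extending $\sigma.\delta_b=\delta_{\sigma.b}$, and on $\mathbb R^{\mathbf C}$ by $(\sigma.f)(X)=f(\sigma^{-1}X)$;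 $F$ is neutral if $F(\sigma.\mathbf p)=\sigma.F(\mathbf p)$ for all $\sigma,\mathbf p$. $F$ satisfies the IIA criterion (independence of irrelevant alternatives) if for every ordered pair of distinct candidates $X,Y$ and all $\mathbf p,\mathbf q\in P$ with $\mathbf p\sim_{X,Y}\mathbf q$, $F(\mathbf p)(X)>F(\mathbf p)(Y)$ implies $F(\mathbf q)(X)>F(\mathbf q)(Y)$. *)

theory Defs
  imports Complex_Main "HOL-Library.Cardinality"
begin

text \<open>Candidates: the finite type 'c. A composition lam is a list of positive
naturals summing to CARD('c). The index set [m] is rendered as {0..<m}
(an order-preserving relabelling of {1..m}).\<close>

definition is_composition :: "nat list \<Rightarrow> nat \<Rightarrow> bool" where
  "is_composition lam n \<longleftrightarrow> (\<forall>i<length lam. lam ! i > 0) \<and> sum_list lam = n"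

definition ballots :: "nat list \<Rightarrow> ('c::finite \<Rightarrow> nat) set" where
  "ballots lam = {b. (\<forall>X. b X < length lam) \<and>
                     (\<forall>i<length lam. card {X. b X = i} = lam ! i)}"

text \<open>Profiles: real functions on ballots, i.e. functions vanishing off the ballots.\<close>
definition profiles :: "nat list \<Rightarrow> (('c::finite \<Rightarrow> nat) \<Rightarrow> real) set" where
  "profiles lam = {p. \<forall>b. b \<notin> ballots lam \<longrightarrow> p b = 0}"

definition pdot :: "nat list \<Rightarrow> (('c::finite \<Rightarrow> nat) \<Rightarrow> real) \<Rightarrow> (('c \<Rightarrow> nat) \<Rightarrow> real) \<Rightarrow> real" where
  "pdot lam p q = (\<Sum>b\<in>ballots lam. p b * q b)"

definition a_pref :: "nat list \<Rightarrow> 'c::finite \<Rightarrow> 'c \<Rightarrow> (('c \<Rightarrow> nat) \<Rightarrow> real)" where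
  "a_pref lam X Y = (\<lambda>b. if b \<in> ballots lam \<and> b X < b Y then 1 else 0)"

definition equiv_XY :: "nat list \<Rightarrow> 'c::finite \<Rightarrow> 'c \<Rightarrow> (('c \<Rightarrow> nat) \<Rightarrow> real) \<Rightarrow> (('c \<Rightarrow> nat) \<Rightarrow> real) \<Rightarrow> bool" where
  "equiv_XY lam X Y p q \<longleftrightarrow>
     pdot lam (\<lambda>b. p b - q b) (a_pref lam X Y) = 0 \<and>
     pdot lam (\<lambda>b. p b - q b) (a_pref lam Y X) = 0"

text \<open>Actions of a permutation s of the candidates:
  on ballots  s.b = b o inv s;  on profiles (linear extension of s.delta_b = delta_(s.b))
  (s.p)(b) = p(b o s);  on R^C  (s.f)(X) = f(inv s X).\<close>
definition act_profile :: "('c \<Rightarrow> 'c) \<Rightarrow> (('c \<Rightarrow> nat) \<Rightarrow> real) \<Rightarrow> (('c \<Rightarrow> nat) \<Rightarrow> real)" where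
  "act_profile s p = (\<lambda>b. p (b \<circ> s))"

definition act_fun :: "('c \<Rightarrow> 'c) \<Rightarrow> ('c \<Rightarrow> real) \<Rightarrow> ('c \<Rightarrow> real)" where
  "act_fun s f = (\<lambda>X. f (inv s X))"

type_synonym 'c cwf = "(('c \<Rightarrow> nat) \<Rightarrow> real) \<Rightarrow> ('c \<Rightarrow> real)"

definition cwf_linear :: "nat list \<Rightarrow> ('c::finite) cwf \<Rightarrow> bool" where
  "cwf_linear lam F \<longleftrightarrow>
     (\<forall>p\<in>profiles lam. \<forall>q\<in>profiles lam. F (\<lambda>b. p b + q b) = (\<lambda>X. F p X + F q X)) \<and>
     (\<forall>p\<in>profiles lam. \<forall>c::real. F (\<lambda>b. c * p b) = (\<lambda>X. c * F p X))"

definition cwf_neutral :: "nat list \<Rightarrow> ('c::finite) cwf \<Rightarrow> bool" where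
  "cwf_neutral lam F \<longleftrightarrow>
     (\<forall>s. bij s \<longrightarrow> (\<forall>p\<in>profiles lam. F (act_profile s p) = act_fun s (F p)))"

definition cwf_trivial :: "nat list \<Rightarrow> ('c::finite) cwf \<Rightarrow> bool" where
  "cwf_trivial lam F \<longleftrightarrow> (\<forall>p\<in>profiles lam. \<forall>X Y. F p X = F p Y)"

definition cwf_IIA :: "nat list \<Rightarrow> ('c::finite) cwf \<Rightarrow> bool" where
  "cwf_IIA lam F \<longleftrightarrow>
     (\<forall>X Y. X \<noteq> Y \<longrightarrow> (\<forall>p\<in>profiles lam. \<forall>q\<in>profiles lam.
        equiv_XY lam X Y p q \<longrightarrow> F p X > F p Y \<longrightarrow> F q X > F q Y))"

end

theory Submission
  imports Defs "HOL-Library.FuncSet"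
begin

lemma ballots_finite: "finite (ballots lam :: ('c::finite \<Rightarrow> nat) set)"
proof -
  have "{b::'c::finite\<Rightarrow>nat. \<forall>X. b X < length lam} = PiE UNIV (\<lambda>_. {..<length lam})"
    by (auto simp: PiE_def extensional_def Pi_def)
  then have "finite {b::'c::finite\<Rightarrow>nat. \<forall>X. b X < length lam}" by (simp add: finite_PiE)
  then show ?thesis by (rule rev_finite_subset) (auto simp: ballots_def)
qed

lemma ballots_comp:
  fixes b :: "'c::finite \<Rightarrow> nat"
  assumes b: "b \<in> ballots lam" and t: "bij t"
  shows "b \<circ> t \<in> ballots lam"
proof -
  have "card {X. b (t X) = i} = card {X. b X = i}" for i
  proof -
    have "t ` {X. b (t X) = i} = {X. b X = i}"
      using t by (auto simp: bij_def)
    moreover have "inj_on t {X. b (t X) = i}" using t by (auto simp: bij_def inj_on_def)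
    ultimately show ?thesis by (metis card_image)
  qed
  then show ?thesis using b by (auto simp: ballots_def)
qed

definition sw :: "'c \<Rightarrow> 'c \<Rightarrow> 'c \<Rightarrow> 'c" where
  "sw a c = (\<lambda>z. if z = a then c else if z = c then a else z)"

lemma sw_bij: "bij (sw a c)"
proof -
  have "sw a c \<circ> sw a c = id" by (auto simp: sw_def fun_eq_iff)
  then show ?thesis by (metis o_bij)
qed

lemma fiber_match:
  fixes b b' :: "'c::finite \<Rightarrow> nat"
  assumes b: "b \<in> ballots lam" and b': "b' \<in> ballots lam"
  shows "\<exists>t. bij t \<and> b' = b \<circ> t"
proof -
  have "\<forall>i. \<exists>f. i < length lam \<longrightarrow> bij_betw f {X. b' X = i} {X. b X = i}"
    using b b' by (auto simp: ballots_def intro!: finite_same_card_bij)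
  then obtain f where f: "\<And>i. i < length lam \<Longrightarrow> bij_betw (f i) {X. b' X = i} {X. b X = i}"
    by metis
  define t where "t X = f (b' X) X" for X
  have bt: "b (t X) = b' X" for X
  proof -
    have "b' X < length lam" using b' by (auto simp: ballots_def)
    then show ?thesis using f[of "b' X"] by (auto simp: t_def bij_betw_def)
  qed
  have "inj t"
  proof
    fix X1 X2 assume e: "t X1 = t X2"
    then have eq: "b' X1 = b' X2" by (metis bt)
    have "b' X1 < length lam" using b' by (auto simp: ballots_def)
    then have "inj_on (f (b' X1)) {X. b' X = b' X1}" using f by (auto simp: bij_betw_def)
    then show "X1 = X2" using e eq by (auto simp: t_def inj_on_def)
  qed
  then have "bij t" by (simp add: bij_def finite_UNIV_inj_surj)
  then show ?thesis using bt by (auto simp: fun_eq_iff)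
qed


definition dl :: "('c \<Rightarrow> nat) \<Rightarrow> (('c \<Rightarrow> nat) \<Rightarrow> real)" where
  "dl b = (\<lambda>c. if c = b then 1 else 0)"

lemma dl_prof: "b \<in> ballots lam \<Longrightarrow> dl b \<in> profiles lam"
  by (auto simp: dl_def profiles_def)

lemma neutral_W:
  fixes F :: "('c::finite) cwf"
  assumes N: "cwf_neutral lam F" and b: "b \<in> ballots lam" and t: "bij t"
  shows "F (dl (b \<circ> t)) Z = F (dl b) (t Z)"
proof -
  have s: "bij (inv t)" using t by (simp add: bij_imp_bij_inv)
  have "act_profile (inv t) (dl b) = dl (b \<circ> t)"
  proof
    fix c :: "'c \<Rightarrow> nat"
    have "(c \<circ> inv t = b) = (c = b \<circ> t)"
      using t by (auto simp: fun_eq_iff bij_inv_eq_iff) (metis bij_inv_eq_iff)+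
    then show "act_profile (inv t) (dl b) c = dl (b \<circ> t) c"
      by (simp add: act_profile_def dl_def)
  qed
  then have "F (dl (b \<circ> t)) = act_fun (inv t) (F (dl b))"
    using N s dl_prof[OF b] by (metis cwf_neutral_def)
  then show ?thesis using t by (simp add: act_fun_def inv_inv_eq)
qed

lemma lemA:
  fixes F :: "('c::finite) cwf"
  assumes N: "cwf_neutral lam F" and b: "b \<in> ballots lam" and b': "b' \<in> ballots lam"
    and e: "b X = b' Y"
  shows "F (dl b) X = F (dl b') Y"
proof -
  obtain t where t: "bij t" and bt: "b' = b \<circ> t" using fiber_match[OF b b'] by blast
  define t' where "t' = sw X (t Y) \<circ> t"
  have "bij t'" unfolding t'_def using t sw_bij by (metis bij_comp)
  have "b \<circ> sw X (t Y) = b" using e bt by (auto simp: sw_def fun_eq_iff)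
  then have "b' = b \<circ> t'" using bt by (simp add: t'_def o_assoc)
  moreover have "t' Y = X" by (simp add: t'_def sw_def)
  ultimately show ?thesis using neutral_W[OF N b \<open>bij t'\<close>] by simp
qed

lemma F_zero:
  fixes F :: "('c::finite) cwf"
  assumes L: "cwf_linear lam F"
  shows "F (\<lambda>c. 0) = (\<lambda>Z. 0)"
proof -
  have "(\<lambda>c. 0::real) \<in> profiles lam" by (simp add: profiles_def)
  from bspec[OF conjunct2[OF L[unfolded cwf_linear_def]] this, THEN spec[of _ 0]]
  show ?thesis by simp
qed

lemma sumdelta_aux: "finite B \<Longrightarrow> (\<forall>b. b \<notin> B \<longrightarrow> p b = (0::real)) \<Longrightarrow> (\<Sum>b\<in>B. p b * (if c = b then 1 else 0)) = p c"
proof -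
  assume a: "finite B" "\<forall>b. b \<notin> B \<longrightarrow> p b = (0::real)"
  have "(\<Sum>b\<in>B. p b * (if c = b then 1 else 0)) = (\<Sum>b\<in>B. if c = b then p b else 0)"
    by (rule sum.cong) auto
  also have "\<dots> = p c" using a by (cases "c \<in> B") (simp_all add: sum.delta)
  finally show ?thesis .
qed

lemma repr:
  fixes F :: "('c::finite) cwf"
  assumes L: "cwf_linear lam F" and p: "p \<in> profiles lam"
  shows "F p Z = (\<Sum>b\<in>ballots lam. p b * F (dl b) Z)"
proof -
  have L1: "\<And>p q. p \<in> profiles lam \<Longrightarrow> q \<in> profiles lam \<Longrightarrow> F (\<lambda>b. p b + q b) = (\<lambda>X. F p X + F q X)"
    and L2: "\<And>p c. p \<in> profiles lam \<Longrightarrow> F (\<lambda>b. c * p b) = (\<lambda>X. c * F p X)"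
    using L unfolding cwf_linear_def by blast+
  have main: "finite S \<Longrightarrow> S \<subseteq> ballots lam \<Longrightarrow> F (\<lambda>c. \<Sum>b\<in>S. p b * dl b c) = (\<lambda>Z. \<Sum>b\<in>S. p b * F (dl b) Z)" for S
  proof (induction S rule: finite_induct)
    case empty
    then show ?case using F_zero[OF L] by simp
  next
    case (insert x S)
    have px: "(\<lambda>c. p x * dl x c) \<in> profiles lam" using insert by (auto simp: profiles_def dl_def)
    have pS: "(\<lambda>c. \<Sum>b\<in>S. p b * dl b c) \<in> profiles lam" using insert
      by (auto simp: profiles_def dl_def intro!: sum.neutral)
    have "F (\<lambda>c. \<Sum>b\<in>insert x S. p b * dl b c) = F (\<lambda>c. (\<lambda>c. p x * dl x c) c + (\<lambda>c. \<Sum>b\<in>S. p b * dl b c) c)"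
      using insert by simp
    also have "\<dots> = (\<lambda>Z. F (\<lambda>c. p x * dl x c) Z + F (\<lambda>c. \<Sum>b\<in>S. p b * dl b c) Z)"
      by (rule L1[OF px pS])
    also have "\<dots> = (\<lambda>Z. p x * F (dl x) Z + (\<Sum>b\<in>S. p b * F (dl b) Z))"
      using insert L2[OF dl_prof[of x lam], of "p x"] by simp
    finally show ?case using insert by simp
  qed
  have pe: "p = (\<lambda>c. \<Sum>b\<in>ballots lam. p b * dl b c)"
  proof
    fix c
    show "p c = (\<Sum>b\<in>ballots lam. p b * dl b c)"
      using p ballots_finite[of lam] unfolding dl_def profiles_def
      by (intro sumdelta_aux[symmetric]) auto
  qed
  have "F p = F (\<lambda>c. \<Sum>b\<in>ballots lam. p b * dl b c)"
    using pe by (rule arg_cong)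
  also have "\<dots> = (\<lambda>Z. \<Sum>b\<in>ballots lam. p b * F (dl b) Z)"
    by (rule main[OF ballots_finite subset_refl])
  finally show ?thesis by (rule fun_cong)
qed


lemma ballot_exists:
  assumes "is_composition lam CARD('c::finite)"
  shows "\<exists>b::'c \<Rightarrow> nat. b \<in> ballots lam"
proof -
  define m where "m = length lam"
  define r where "r = concat (map (\<lambda>j. replicate (lam!j) j) [0..<m])"
  have lr: "length r = CARD('c)"
  proof -
    have "length r = sum_list (map (\<lambda>j. lam!j) [0..<m])"
      by (simp add: r_def length_concat o_def)
    also have "\<dots> = sum_list lam" by (simp add: m_def map_nth)
    finally show ?thesis using assms by (simp add: is_composition_def)
  qed
  have rset: "set r \<subseteq> {..<m}" by (auto simp: r_def)
  have rcnt: "card {k. k < length r \<and> r!k = i} = lam!i" if "i < m" for i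
  proof -
    have fr: "length (filter P (replicate n x)) = (if P x then n else 0)" for P n and x :: nat
      by (induction n) auto
    have "card {k. k < length r \<and> r!k = i} = length (filter (\<lambda>x. x = i) r)"
      by (simp add: length_filter_conv_card)
    also have "\<dots> = sum_list (map (\<lambda>j. if j = i then lam!j else 0) [0..<m])"
      by (simp add: r_def filter_concat length_concat o_def fr)
    also have "\<dots> = (\<Sum>j\<in>{0..<m}. if j = i then lam!j else 0)"
      by (simp add: interv_sum_list_conv_sum_set_nat)
    also have "\<dots> = lam!i" using that by simp
    finally show ?thesis .
  qed
  obtain e :: "'c \<Rightarrow> nat" where e: "bij_betw e UNIV {0..<CARD('c)}"
    using finite_same_card_bij[of "UNIV::'c set" "{0..<CARD('c)}"] by auto
  define b where "b X = r ! (e X)" for X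
  have "b \<in> ballots lam"
    unfolding ballots_def
  proof (intro CollectI conjI allI impI)
    fix X
    have "e X < length r" using e lr by (auto simp: bij_betw_def)
    then show "b X < length lam" using rset nth_mem unfolding b_def m_def by blast
  next
    fix i assume i: "i < length lam"
    have "e ` {X. b X = i} = {k. k < length r \<and> r!k = i}"
      using e lr unfolding b_def bij_betw_def by force
    moreover have "inj_on e {X. b X = i}" using e by (auto simp: bij_betw_def inj_on_def)
    ultimately have "card {X. b X = i} = card {k. k < length r \<and> r!k = i}" by (metis card_image)
    then show "card {X. b X = i} = lam ! i" using rcnt i m_def by simp
  qed
  then show ?thesis by blast
qed

lemma ballot_vals:
  fixes X Y :: "'c::finite"
  assumes comp: "is_composition lam CARD('c)" and XY: "X \<noteq> Y"
    and i: "i < length lam" and j: "j < length lam" and ij: "i \<noteq> j"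
  shows "\<exists>b\<in>ballots lam. b X = i \<and> b Y = j"
proof -
  obtain b0 :: "'c \<Rightarrow> nat" where b0: "b0 \<in> ballots lam" using ballot_exists[OF comp] by blast
  have ne: "{Z. b Z = k} \<noteq> {}" if "b \<in> ballots lam" "k < length lam" for b :: "'c \<Rightarrow> nat" and k
  proof
    assume "{Z. b Z = k} = {}"
    then have "lam ! k = 0" using that by (auto simp: ballots_def)
    then show False using comp that(2) by (auto simp: is_composition_def)
  qed
  obtain X' where X': "b0 X' = i" using ne[OF b0 i] by blast
  define b1 where "b1 = b0 \<circ> sw X X'"
  have b1: "b1 \<in> ballots lam" unfolding b1_def by (rule ballots_comp[OF b0 sw_bij])
  have b1X: "b1 X = i" using X' by (simp add: b1_def sw_def)
  obtain Y' where Y': "b1 Y' = j" using ne[OF b1 j] by blast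
  have "Y' \<noteq> X" using b1X Y' ij by auto
  define b2 where "b2 = b1 \<circ> sw Y Y'"
  have b2: "b2 \<in> ballots lam" unfolding b2_def by (rule ballots_comp[OF b1 sw_bij])
  have "b2 X = i" using b1X XY \<open>Y' \<noteq> X\<close> by (simp add: b2_def sw_def)
  moreover have "b2 Y = j" using Y' by (simp add: b2_def sw_def)
  ultimately show ?thesis using b2 by blast
qed



lemma sum_dl:
  fixes b :: "'c::finite \<Rightarrow> nat"
  assumes "b \<in> ballots lam"
  shows "(\<Sum>c\<in>ballots lam. dl b c * f c) = (f b :: real)"
proof -
  have "(\<Sum>c\<in>ballots lam. dl b c * f c) = (\<Sum>c\<in>ballots lam. if c = b then f c else 0)"
    by (rule sum.cong) (auto simp: dl_def)
  also have "\<dots> = f b" using assms ballots_finite[of lam] by (subst sum.delta) auto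
  finally show ?thesis .
qed

lemma IIA_step:
  fixes F :: "('c::finite) cwf"
  assumes L: "cwf_linear lam F" and I: "cwf_IIA lam F" and XY: "X \<noteq> Y"
    and b: "b \<in> ballots lam" and b': "b' \<in> ballots lam"
    and bl: "b X < b Y" and bl': "b' X < b' Y"
  shows "F (dl b) X - F (dl b) Y \<le> F (dl b') X - F (dl b') Y"
proof (rule ccontr)
  assume c: "\<not> ?thesis"
  define r where "r = (\<lambda>c. dl b c - dl b' c)"
  have rp: "r \<in> profiles lam" using b b' by (auto simp: r_def profiles_def dl_def)
  have zp: "(\<lambda>c. 0::real) \<in> profiles lam" by (simp add: profiles_def)
  have Fr: "F r Z = F (dl b) Z - F (dl b') Z" for Z
  proof -
    have "F r Z = (\<Sum>c\<in>ballots lam. r c * F (dl c) Z)" by (rule repr[OF L rp])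
    also have "\<dots> = (\<Sum>c\<in>ballots lam. dl b c * F (dl c) Z) - (\<Sum>c\<in>ballots lam. dl b' c * F (dl c) Z)"
      by (simp add: r_def left_diff_distrib sum_subtractf)
    also have "\<dots> = F (dl b) Z - F (dl b') Z" using sum_dl[OF b] sum_dl[OF b'] by simp
    finally show ?thesis .
  qed
  have pd: "pdot lam r a = a b - a b'" for a
  proof -
    have "pdot lam r a = (\<Sum>c\<in>ballots lam. dl b c * a c) - (\<Sum>c\<in>ballots lam. dl b' c * a c)"
      by (simp add: pdot_def r_def left_diff_distrib sum_subtractf)
    then show ?thesis using sum_dl[OF b] sum_dl[OF b'] by simp
  qed
  have "equiv_XY lam X Y r (\<lambda>c. 0)"
    using b b' bl bl' by (simp add: equiv_XY_def pd a_pref_def)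
  moreover have "F r X > F r Y" using c Fr by simp
  ultimately have "F (\<lambda>c. 0) X > F (\<lambda>c. 0) Y"
    using I XY rp zp unfolding cwf_IIA_def by blast
  then show False using F_zero[OF L] by simp
qed


lemma all_equal_trivial:
  fixes F :: "('c::finite) cwf"
  assumes L: "cwf_linear lam F"
    and W: "\<And>b X Y. b \<in> ballots lam \<Longrightarrow> F (dl b) X = F (dl b) Y"
  shows "cwf_trivial lam F"
  unfolding cwf_trivial_def
proof (intro ballI allI)
  fix p :: "('c \<Rightarrow> nat) \<Rightarrow> real" and X Y :: 'c assume p: "p \<in> profiles lam"
  have "(\<Sum>b\<in>ballots lam. p b * F (dl b) X) = (\<Sum>b\<in>ballots lam. p b * F (dl b) Y)"
    by (rule sum.cong) (simp_all add: W)
  then show "F p X = F p Y" using repr[OF L p, of X] repr[OF L p, of Y] by simp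
qed

theorem mainTheorem8:
  fixes lam :: "nat list" and F :: "('c::finite) cwf"
  assumes "CARD('c) \<ge> 2"
    and "is_composition lam CARD('c)"
    and "\<not> cwf_trivial lam F"
    and "cwf_linear lam F"
    and "cwf_neutral lam F"
  shows "cwf_IIA lam F \<longleftrightarrow> length lam = 2"
proof
  assume I: "cwf_IIA lam F"
  show "length lam = 2"
  proof (rule ccontr)
    assume m2: "length lam \<noteq> 2"
    have "length lam \<noteq> 0" using assms(1,2) by (auto simp: is_composition_def)
    then consider "length lam = 1" | "length lam \<ge> 3" using m2 by linarith
    then have "cwf_trivial lam F"
    proof cases
      case 1
      show ?thesis
      proof (rule all_equal_trivial[OF assms(4)])
        fix b :: "'c \<Rightarrow> nat" and X Y assume b: "b \<in> ballots lam"
        then have "b X = b Y" using 1 by (auto simp: ballots_def)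
        then show "F (dl b) X = F (dl b) Y" by (rule lemA[OF assms(5) b b])
      qed
    next
      case 2
      have zero: "F (dl b) X = F (dl b) Y" if XY: "X \<noteq> Y" and b: "b \<in> ballots lam" and bl: "b X < b Y"
        for b :: "'c \<Rightarrow> nat" and X Y
      proof -
        define d where "d b = F (dl b) X - F (dl b) Y" for b
        have eqd: "d b1 = d b2" if "b1 \<in> ballots lam" "b2 \<in> ballots lam" "b1 X < b1 Y" "b2 X < b2 Y" for b1 b2
          using IIA_step[OF assms(4) I XY that] IIA_step[OF assms(4) I XY that(2,1,4,3)]
          unfolding d_def by linarith
        have l0: "0 < length lam" and l1: "1 < length lam" and l2: "2 < length lam" using 2 by auto
        obtain b01 where b01: "b01 \<in> ballots lam" "b01 X = 0" "b01 Y = 1"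
          using ballot_vals[OF assms(2) XY l0 l1] by auto
        obtain b12 where b12: "b12 \<in> ballots lam" "b12 X = 1" "b12 Y = 2"
          using ballot_vals[OF assms(2) XY l1 l2] by auto
        obtain b02 where b02: "b02 \<in> ballots lam" "b02 X = 0" "b02 Y = 2"
          using ballot_vals[OF assms(2) XY l0 l2] by auto
        have e1: "F (dl b01) Y = F (dl b12) X" using b01 b12 by (intro lemA[OF assms(5)]) auto
        have e2: "F (dl b01) X = F (dl b02) X" using b01 b02 by (intro lemA[OF assms(5)]) auto
        have e3: "F (dl b12) Y = F (dl b02) Y" using b12 b02 by (intro lemA[OF assms(5)]) auto
        have "d b02 = d b01 + d b12" using e1 e2 e3 unfolding d_def by simp
        moreover have "d b01 = d b02" by (rule eqd) (use b01 b02 in simp_all)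
        moreover have "d b12 = d b02" by (rule eqd) (use b12 b02 in simp_all)
        ultimately have "d b02 = 0" by linarith
        moreover have "d b = d b02" by (rule eqd) (use b b02 bl in simp_all)
        ultimately show ?thesis unfolding d_def by simp
      qed
      show ?thesis
      proof (rule all_equal_trivial[OF assms(4)])
        fix b :: "'c \<Rightarrow> nat" and X Y assume b: "b \<in> ballots lam"
        show "F (dl b) X = F (dl b) Y"
        proof (cases "X = Y")
          case False
          consider "b X = b Y" | "b X < b Y" | "b Y < b X" by linarith
          then show ?thesis
          proof cases
            case 1 then show ?thesis by (rule lemA[OF assms(5) b b])
          next
            case 2 then show ?thesis using zero False b by blast
          next
            case 3 then show ?thesis using zero[of Y X b] False b by auto
          qed
        qed simp
      qed
    qed
    then show False using assms(3) by simp
  qed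
next
  assume m2: "length lam = 2"
  show "cwf_IIA lam F"
    unfolding cwf_IIA_def
  proof (intro allI impI ballI)
    fix X Y :: 'c and p q
    assume XY: "X \<noteq> Y" and p: "p \<in> profiles lam" and q: "q \<in> profiles lam"
      and eq: "equiv_XY lam X Y p q" and gt: "F p X > F p Y"
    define B where "B = (ballots lam :: ('c \<Rightarrow> nat) set)"
    define d where "d b = F (dl b) X - F (dl b) Y" for b
    define r where "r b = p b - q b" for b
    have vals: "b X < 2" "b Y < 2" if "b \<in> B" for b
      using that m2 by (auto simp: B_def ballots_def)
    have cst: "d b1 = d b2" if "b1 \<in> B" "b2 \<in> B" "b1 X = b2 X" "b1 Y = b2 Y" for b1 b2
      using that lemA[OF assms(5), of b1 b2 X X] lemA[OF assms(5), of b1 b2 Y Y]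
      unfolding d_def B_def by simp
    define d1 where "d1 = d (SOME b. b \<in> B \<and> b X < b Y)"
    define d2 where "d2 = d (SOME b. b \<in> B \<and> b Y < b X)"
    have dform: "d b = a_pref lam X Y b * d1 + a_pref lam Y X b * d2" if b: "b \<in> B" for b
    proof -
      consider "b X = b Y" | "b X < b Y" | "b Y < b X" by linarith
      then show ?thesis
      proof cases
        case 1
        then have "d b = 0" using lemA[OF assms(5), of b b X Y] b unfolding d_def B_def by simp
        then show ?thesis using 1 by (simp add: a_pref_def)
      next
        case 2
        define b' where "b' = (SOME b. b \<in> B \<and> b X < b Y)"
        have b': "b' \<in> B \<and> b' X < b' Y" unfolding b'_def by (rule someI[where x=b]) (use b 2 in simp)
        have "b X = b' X" "b Y = b' Y" using b' 2 vals[OF b] vals[of b'] by auto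
        then have "d b = d b'" using cst[of b b'] b b' by blast
        then show ?thesis using 2 b by (simp add: a_pref_def d1_def b'_def B_def)
      next
        case 3
        define b' where "b' = (SOME b. b \<in> B \<and> b Y < b X)"
        have b': "b' \<in> B \<and> b' Y < b' X" unfolding b'_def by (rule someI[where x=b]) (use b 3 in simp)
        have "b X = b' X" "b Y = b' Y" using b' 3 vals[OF b] vals[of b'] by auto
        then have "d b = d b'" using cst[of b b'] b b' by blast
        then show ?thesis using 3 b by (simp add: a_pref_def d2_def b'_def B_def)
      qed
    qed
    have Fd: "F s X - F s Y = (\<Sum>b\<in>B. s b * d b)" if "s \<in> profiles lam" for s
      using repr[OF assms(4) that, of X] repr[OF assms(4) that, of Y]
      by (simp add: B_def d_def right_diff_distrib sum_subtractf)
    have "(F p X - F p Y) - (F q X - F q Y) = (\<Sum>b\<in>B. p b * d b) - (\<Sum>b\<in>B. q b * d b)"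
      using Fd[OF p] Fd[OF q] by simp
    also have "\<dots> = (\<Sum>b\<in>B. r b * d b)"
      by (simp add: r_def left_diff_distrib sum_subtractf)
    also have "\<dots> = (\<Sum>b\<in>B. d1 * (r b * a_pref lam X Y b) + d2 * (r b * a_pref lam Y X b))"
      by (rule sum.cong) (simp_all add: dform distrib_left)
    also have "\<dots> = d1 * pdot lam r (a_pref lam X Y) + d2 * pdot lam r (a_pref lam Y X)"
      by (simp add: pdot_def B_def sum.distrib sum_distrib_left)
    also have "\<dots> = 0" using eq unfolding equiv_XY_def r_def by simp
    finally show "F q X > F q Y" using gt by simp
  qed
qed

end
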